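(* Let $d_1,d_2\ge2$ and let $\rho_{12}$ be a (possibly mixed) density operator on $\mathbb{C}^{d_1}\otimes\mathbb{C}^{d_2}$. Write $t_{u_1,u_2}=\operatorname{tr}\big(\rho_{12}\,(A^{(1)}_{u_1})^{\dagger}\otimes(A^{(2)}_{u_2})^{\dagger}\big)$ for $0\le u_s\le d_s^2-1$, so that $\rho_{12}=\frac{1}{d_1d_2}\sum_{u_1,u_2}t_{u_1,u_2}A^{(1)}_{u_1}\otimes A^{(2)}_{u_2}$, and let $T^{(12)}$ be the vector with entries $t_{u_1,u_2}$ for $u_1\ne0$, $u_2\ne0$. Then $$\|T^{(12)}\|^2\le d_1d_2\Big(1-\frac{1}{d_1^2}-\frac{1}{d_2^2}\Big)+1.$$
   Context: Generalized Pauli operators: for an integer $d\ge2$, let $\omega$ be a fixed primitive $d$-th root of unity and let $E_{m,j}$ ($0\le m,j\le d-1$) be the $d\times d$ matrix units, with indices taken modulo $d$. Each $u\in\{0,\dots,d^2-1\}$ is written uniquely as $u=di+j$ with $0\le i,j\le d-1$, and one sets $A_u=A_{di+j}=\sum_{m=0}^{d-1}\omega^{im}E_{m,m+j}$. Thus $A_0=I_d$ and $\operatorname{tr}(A_uA_v^{\dagger})=d\,\delta_{uv}$. $A^{(s)}_u$ denotes these operators for $d=d_s$. For a complex vector $v$, $\|v\|=\sqrt{v^{\dagger}v}$. *)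

theory Defs
  imports Complex_Main
begin

text \<open>Square complex matrices of size n are represented as functions
  nat \<Rightarrow> nat \<Rightarrow> complex; only the entries with both indices below n matter.
  Indices of C^{d1} \<otimes> C^{d2} are encoded as a1 * d2 + a2 with a1 < d1, a2 < d2.\<close>

definition primitive_root :: "nat \<Rightarrow> complex \<Rightarrow> bool" where
  "primitive_root d w \<longleftrightarrow> w ^ d = 1 \<and> (\<forall>k. 0 < k \<and> k < d \<longrightarrow> w ^ k \<noteq> 1)"

text \<open>Generalized Pauli operator A_u = A_{d i + j} = sum_m w^(i m) E_{m, m+j}.\<close>
definition gpauli :: "nat \<Rightarrow> complex \<Rightarrow> nat \<Rightarrow> nat \<Rightarrow> nat \<Rightarrow> complex" where
  "gpauli d w u m n = (if m < d \<and> n < d \<and> n = (m + u mod d) mod d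
                        then w ^ ((u div d) * m) else 0)"

definition kron :: "nat \<Rightarrow> nat \<Rightarrow> (nat \<Rightarrow> nat \<Rightarrow> complex) \<Rightarrow> (nat \<Rightarrow> nat \<Rightarrow> complex)
                     \<Rightarrow> nat \<Rightarrow> nat \<Rightarrow> complex" where
  "kron d1 d2 A B r c = (if r < d1 * d2 \<and> c < d1 * d2
     then A (r div d2) (c div d2) * B (r mod d2) (c mod d2) else 0)"

definition adj :: "(nat \<Rightarrow> nat \<Rightarrow> complex) \<Rightarrow> nat \<Rightarrow> nat \<Rightarrow> complex" where
  "adj A r c = cnj (A c r)"

definition mmult :: "nat \<Rightarrow> (nat \<Rightarrow> nat \<Rightarrow> complex) \<Rightarrow> (nat \<Rightarrow> nat \<Rightarrow> complex)
                      \<Rightarrow> nat \<Rightarrow> nat \<Rightarrow> complex" where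
  "mmult n A B r c = (\<Sum>k<n. A r k * B k c)"

definition mtrace :: "nat \<Rightarrow> (nat \<Rightarrow> nat \<Rightarrow> complex) \<Rightarrow> complex" where
  "mtrace n A = (\<Sum>k<n. A k k)"

definition density_op :: "nat \<Rightarrow> (nat \<Rightarrow> nat \<Rightarrow> complex) \<Rightarrow> bool" where
  "density_op n \<rho> \<longleftrightarrow>
     (\<forall>r<n. \<forall>c<n. \<rho> r c = cnj (\<rho> c r)) \<and>
     (\<forall>v :: nat \<Rightarrow> complex. 0 \<le> Re (\<Sum>r<n. \<Sum>c<n. cnj (v r) * \<rho> r c * v c)) \<and>
     mtrace n \<rho> = 1"

definition corr :: "nat \<Rightarrow> nat \<Rightarrow> complex \<Rightarrow> complex \<Rightarrow> (nat \<Rightarrow> nat \<Rightarrow> complex)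
                     \<Rightarrow> nat \<Rightarrow> nat \<Rightarrow> complex" where
  "corr d1 d2 w1 w2 \<rho> u1 u2 =
     mtrace (d1 * d2) (mmult (d1 * d2) \<rho>
        (kron d1 d2 (adj (gpauli d1 w1 u1)) (adj (gpauli d2 w2 u2))))"

end

theory Submission
  imports Defs "HOL-Analysis.Analysis"
begin


definition herm :: "nat \<Rightarrow> (nat \<Rightarrow> nat \<Rightarrow> complex) \<Rightarrow> bool" where
  "herm n \<rho> \<longleftrightarrow> (\<forall>r<n. \<forall>c<n. \<rho> r c = cnj (\<rho> c r))"
definition qf :: "nat \<Rightarrow> (nat \<Rightarrow> nat \<Rightarrow> complex) \<Rightarrow> (nat \<Rightarrow> complex) \<Rightarrow> complex" where
  "qf n \<rho> v = (\<Sum>r<n. \<Sum>c<n. cnj (v r) * \<rho> r c * v c)"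
definition psd :: "nat \<Rightarrow> (nat \<Rightarrow> nat \<Rightarrow> complex) \<Rightarrow> bool" where
  "psd n \<rho> \<longleftrightarrow> (\<forall>v. 0 \<le> Re (qf n \<rho> v))"

lemma sum_if_mult_right: "(p::nat) < n \<Longrightarrow> (\<Sum>c<n. f c * (if c = p then t else 0)) = f p * (t::complex)"
proof -
  assume "p < n"
  have "(\<Sum>c<n. f c * (if c = p then t else 0)) = (\<Sum>c<n. if c = p then f p * t else 0)"
    by (rule sum.cong) auto
  also have "\<dots> = f p * t" using \<open>p<n\<close> by (simp add: sum.delta sum.delta')
  finally show ?thesis .
qed

lemma sum_if_mult_left: "(p::nat) < n \<Longrightarrow> (\<Sum>c<n. (if c = p then t else 0) * f c) = (t::complex) * f p"
  using sum_if_mult_right[of p n f t] by (simp add: mult.commute)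

lemma qf_expand:
  assumes "p < n"
  shows "qf n \<rho> (\<lambda>i. v i + (if i = p then t else 0)) =
    qf n \<rho> v + t * (\<Sum>r<n. cnj (v r) * \<rho> r p) + cnj t * (\<Sum>c<n. \<rho> p c * v c) + cnj t * t * \<rho> p p"
proof -
  have e: "cnj (v r + (if r = p then t else 0)) * \<rho> r c * (v c + (if c = p then t else 0))
     = cnj (v r) * \<rho> r c * v c + (cnj (v r) * \<rho> r c) * (if c = p then t else 0)
       + (if r = p then cnj t else 0) * (\<rho> r c * v c)
       + (if r = p then cnj t else 0) * (\<rho> r c * (if c = p then t else 0))" for r c
    by (auto simp: algebra_simps)
  have s1: "(\<Sum>r<n. \<Sum>c<n. (cnj (v r) * \<rho> r c) * (if c = p then t else 0)) = t * (\<Sum>r<n. cnj (v r) * \<rho> r p)"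
  proof -
    have "\<And>r. (\<Sum>c<n. (cnj (v r) * \<rho> r c) * (if c = p then t else 0)) = (cnj (v r) * \<rho> r p) * t"
      using assms by (rule sum_if_mult_right)
    then show ?thesis by (simp only: sum_distrib_left) (simp add: mult.commute)
  qed
  have s2: "(\<Sum>r<n. \<Sum>c<n. (if r = p then cnj t else 0) * (\<rho> r c * v c)) = cnj t * (\<Sum>c<n. \<rho> p c * v c)"
    using assms by (simp add: sum_if_mult_left sum.swap[of _ "{..<n}" "{..<n}"] flip: sum_distrib_left)
  have s3: "(\<Sum>r<n. \<Sum>c<n. (if r = p then cnj t else 0) * (\<rho> r c * (if c = p then t else 0))) = cnj t * t * \<rho> p p"
  proof -
    have "\<And>r. (\<Sum>c<n. ((if r = p then cnj t else 0) * \<rho> r c) * (if c = p then t else 0)) = ((if r = p then cnj t else 0) * \<rho> r p) * t"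
      by (rule sum_if_mult_right[OF assms])
    then have "(\<Sum>r<n. \<Sum>c<n. (if r = p then cnj t else 0) * (\<rho> r c * (if c = p then t else 0))) = (\<Sum>r<n. (if r = p then cnj t else 0) * (\<rho> r p * t))"
      by (simp only: mult.assoc)
    also have "\<dots> = cnj t * (\<rho> p p * t)" using assms by (rule sum_if_mult_left)
    finally show ?thesis by (simp add: mult_ac)
  qed
  show ?thesis
    unfolding qf_def e sum.distrib s1 s2 s3 by simp
qed

lemma qf_unit:
  assumes "p < n"
  shows "qf n \<rho> (\<lambda>i. if i = p then t else 0) = cnj t * t * \<rho> p p"
proof -
  have "qf n \<rho> (\<lambda>i. 0) = 0" by (simp add: qf_def)
  then show ?thesis using qf_expand[OF assms, of \<rho> "\<lambda>i. 0" t] by simp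
qed

lemma diag_nonneg: "psd n \<rho> \<Longrightarrow> p < n \<Longrightarrow> 0 \<le> Re (\<rho> p p)"
proof -
  assume "psd n \<rho>" "p < n"
  then have "0 \<le> Re (qf n \<rho> (\<lambda>i. if i = p then 1 else 0))" unfolding psd_def by blast
  then show ?thesis using qf_unit[OF \<open>p < n\<close>, of \<rho> 1] by simp
qed

lemma herm_diag_real: "herm n \<rho> \<Longrightarrow> p < n \<Longrightarrow> \<rho> p p = complex_of_real (Re (\<rho> p p))"
proof -
  assume "herm n \<rho>" "p < n"
  then have "\<rho> p p = cnj (\<rho> p p)" unfolding herm_def by blast
  then have "Im (\<rho> p p) = 0" by (metis cnj.simps(2) complex.expand neg_equal_zero cnj.simps(1))
  then show ?thesis by (simp add: complex_eq_iff)
qed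

lemma zero_row:
  assumes H: "herm n \<rho>" and P: "psd n \<rho>" and p: "p < n" and c: "c < n" and z: "\<rho> p p = 0"
  shows "\<rho> p c = 0"
proof (cases "c = p")
  case True then show ?thesis using z by simp
next
  case False
  define s where "s = \<rho> p c"
  have cs: "\<rho> c p = cnj s" using H p c unfolding herm_def s_def by blast
  define v where "v = (\<lambda>i::nat. if i = c then (1::complex) else 0)"
  have qv: "qf n \<rho> v = \<rho> c c" using qf_unit[OF c, of \<rho> 1] by (simp add: v_def)
  have sv1: "(\<Sum>r<n. cnj (v r) * \<rho> r p) = \<rho> c p"
  proof -
    have "(\<Sum>r<n. cnj (v r) * \<rho> r p) = (\<Sum>r<n. (if r = c then 1 else 0) * \<rho> r p)"
      by (rule sum.cong) (auto simp: v_def)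
    also have "\<dots> = 1 * \<rho> c p" by (rule sum_if_mult_left[OF c])
    finally show ?thesis by simp
  qed
  have sv2: "(\<Sum>r<n. \<rho> p r * v r) = \<rho> p c"
  proof -
    have "(\<Sum>r<n. \<rho> p r * v r) = (\<Sum>r<n. \<rho> p r * (if r = c then 1 else 0))"
      by (rule sum.cong) (auto simp: v_def)
    also have "\<dots> = \<rho> p c * 1" by (rule sum_if_mult_right[OF c])
    finally show ?thesis by simp
  qed
  show ?thesis
  proof (rule ccontr)
    assume "\<rho> p c \<noteq> 0"
    then have sp: "0 < (cmod s)^2" using s_def by simp
    define l where "l = (Re (\<rho> c c) + 1) / (2 * (cmod s)^2)"
    define t where "t = - complex_of_real l * s"
    have "qf n \<rho> (\<lambda>i. v i + (if i = p then t else 0)) = \<rho> c c + t * cnj s + cnj t * s"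
      unfolding qf_expand[OF p, of \<rho> v t] qv sv1 sv2 cs z s_def by simp
    also have "\<dots> = \<rho> c c - 2 * complex_of_real l * (s * cnj s)"
      by (simp add: t_def algebra_simps)
    also have "s * cnj s = complex_of_real ((cmod s)^2)" by (simp only: complex_norm_square)
    finally have "Re (qf n \<rho> (\<lambda>i. v i + (if i = p then t else 0))) = Re (\<rho> c c) - 2 * l * (cmod s)^2"
      by simp
    also have "\<dots> = -1" using sp by (simp add: l_def field_simps)
    finally have "Re (qf n \<rho> (\<lambda>i. v i + (if i = p then t else 0))) = -1" .
    moreover have "0 \<le> Re (qf n \<rho> (\<lambda>i. v i + (if i = p then t else 0)))" using P unfolding psd_def by blast
    ultimately show False by simp
  qed
qed

lemma sum_lessThan_Suc_upd:
  "(\<Sum>k<Suc j. (x(j := y)) k r * cnj ((x(j := y)) k c)) = (\<Sum>k<j. x k r * cnj (x k c)) + y r * cnj (y c)"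
proof -
  have "(\<Sum>k<j. (x(j := y)) k r * cnj ((x(j := y)) k c)) = (\<Sum>k<j. x k r * cnj (x k c))"
    by (rule sum.cong) auto
  then show ?thesis by simp
qed

lemma gram_aux:
  "j \<le> n \<Longrightarrow> herm n \<rho> \<Longrightarrow> psd n \<rho> \<Longrightarrow>
   (\<forall>r<n. \<forall>c<n. (r < n - j \<or> c < n - j) \<longrightarrow> \<rho> r c = 0) \<Longrightarrow>
   \<exists>x. \<forall>r<n. \<forall>c<n. \<rho> r c = (\<Sum>k<j. x k r * cnj (x k c))"
proof (induction j arbitrary: \<rho>)
  case 0
  then show ?case by auto
next
  case (Suc j)
  note H = Suc.prems(2) and P = Suc.prems(3) and Z = Suc.prems(4)
  define p where "p = n - Suc j"
  have pn: "p < n" and nj: "n - j = Suc p" using Suc.prems(1) by (auto simp: p_def)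
  have jn: "j \<le> n" using Suc.prems(1) by simp
  show ?case
  proof (cases "\<rho> p p = 0")
    case True
    have row: "\<rho> p c = 0" if "c < n" for c using zero_row[OF H P pn that True] .
    have col: "\<rho> c p = 0" if "c < n" for c using row[OF that] H pn that unfolding herm_def
      by (metis complex_cnj_zero)
    have "\<forall>r<n. \<forall>c<n. (r < n - j \<or> c < n - j) \<longrightarrow> \<rho> r c = 0"
    proof (intro allI impI)
      fix r c assume rc: "r < n" "c < n" "r < n - j \<or> c < n - j"
      then consider "r < p \<or> c < p" | "r = p" | "c = p" using nj by linarith
      then show "\<rho> r c = 0"
      proof cases
        case 1 then show ?thesis using Z rc p_def by auto
      next
        case 2 then show ?thesis using row rc by simp
      next
        case 3 then show ?thesis using col rc by simp
      qed
    qed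
    then obtain x where x: "\<forall>r<n. \<forall>c<n. \<rho> r c = (\<Sum>k<j. x k r * cnj (x k c))"
      using Suc.IH[OF jn H P] by blast
    show ?thesis
    proof (rule exI[of _ "x(j := (\<lambda>_. 0))"], intro allI impI)
      fix r c assume "r < n" "c < n"
      then show "\<rho> r c = (\<Sum>k<Suc j. (x(j := (\<lambda>_. 0))) k r * cnj ((x(j := (\<lambda>_. 0))) k c))"
        unfolding sum_lessThan_Suc_upd using x by simp
    qed
  next
    case False
    define a where "a = Re (\<rho> p p)"
    have pa: "\<rho> p p = complex_of_real a" using herm_diag_real[OF H pn] a_def by simp
    have "a \<noteq> 0" using False pa by auto
    then have a0: "0 < a" using diag_nonneg[OF P pn] a_def by linarith
    define sq where "sq = complex_of_real (sqrt a)"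
    have sqsq: "sq * sq = complex_of_real a" using a0 unfolding sq_def of_real_mult[symmetric]
      by simp
    have sqc: "cnj sq = sq" by (simp add: sq_def)
    have sq0: "sq \<noteq> 0" using a0 by (simp add: sq_def)
    define y where "y = (\<lambda>r. \<rho> r p / sq)"
    define \<rho>' where "\<rho>' = (\<lambda>r c. \<rho> r c - y r * cnj (y c))"
    have yy: "y r * cnj (y c) = \<rho> r p * \<rho> p c / complex_of_real a" if "r < n" "c < n" for r c
    proof -
      have "\<rho> p c = cnj (\<rho> c p)" using H that pn unfolding herm_def by blast
      then have "cnj (\<rho> c p) = \<rho> p c" by simp
      then have "y r * cnj (y c) = \<rho> r p * \<rho> p c / (sq * sq)" unfolding y_def using sqc by simp
      then show ?thesis using sqsq by simp
    qed
    have H': "herm n \<rho>'"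
      unfolding herm_def \<rho>'_def
    proof (intro allI impI)
      fix r c assume "r < n" "c < n"
      then have "\<rho> r c = cnj (\<rho> c r)" using H unfolding herm_def by blast
      then show "\<rho> r c - y r * cnj (y c) = cnj (\<rho> c r - y c * cnj (y r))" by (simp add: mult.commute)
    qed
    have P': "psd n \<rho>'"
      unfolding psd_def
    proof
      fix v :: "nat \<Rightarrow> complex"
      define s where "s = (\<Sum>c<n. \<rho> p c * v c)"
      have cs: "(\<Sum>r<n. cnj (v r) * \<rho> r p) = cnj s"
      proof -
        have "(\<Sum>r<n. cnj (v r) * \<rho> r p) = (\<Sum>r<n. cnj (\<rho> p r * v r))"
        proof (rule sum.cong)
          fix r assume "r \<in> {..<n}"
          then have "\<rho> r p = cnj (\<rho> p r)" using H pn unfolding herm_def by blast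
          then show "cnj (v r) * \<rho> r p = cnj (\<rho> p r * v r)" by (simp add: mult.commute)
        qed simp
        then show ?thesis by (simp add: s_def cnj_sum)
      qed
      have e1: "(\<Sum>r<n. cnj (v r) * y r) = cnj s / sq"
        unfolding y_def using cs by (simp add: sum_divide_distrib[symmetric] mult.commute times_divide_eq_right)
      have e2: "(\<Sum>c<n. cnj (y c) * v c) = s / sq"
      proof -
        have "(\<Sum>c<n. cnj (y c) * v c) = (\<Sum>c<n. \<rho> p c * v c / sq)"
        proof (rule sum.cong)
          fix c assume "c \<in> {..<n}"
          then have "\<rho> p c = cnj (\<rho> c p)" using H pn unfolding herm_def by blast
          then show "cnj (y c) * v c = \<rho> p c * v c / sq" using sqc by (simp add: y_def)
        qed simp
        then show ?thesis by (simp add: s_def sum_divide_distrib)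
      qed
      have q1: "qf n \<rho>' v = qf n \<rho> v - (\<Sum>r<n. cnj (v r) * y r) * (\<Sum>c<n. cnj (y c) * v c)"
        unfolding qf_def \<rho>'_def sum_product
        by (simp add: algebra_simps sum_subtractf)
      define t where "t = - s / complex_of_real a"
      have q2: "qf n \<rho> (\<lambda>i. v i + (if i = p then t else 0)) = qf n \<rho> v + t * cnj s + cnj t * s + cnj t * t * complex_of_real a"
        unfolding qf_expand[OF pn] cs s_def pa by simp
      have "qf n \<rho>' v = qf n \<rho> (\<lambda>i. v i + (if i = p then t else 0))"
      proof -
        have an: "complex_of_real a \<noteq> 0" using a0 by simp
        have ct: "cnj t = - cnj s / complex_of_real a" by (simp add: t_def)
        have "cnj s / sq * (s / sq) = cnj s * s / complex_of_real a" using sqsq by simp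
        then have "qf n \<rho>' v = qf n \<rho> v - cnj s * s / complex_of_real a" unfolding q1 e1 e2 by simp
        also have "\<dots> = qf n \<rho> v + t * cnj s + cnj t * s + cnj t * t * complex_of_real a"
          unfolding ct t_def using an by (simp add: field_simps)
        finally show ?thesis unfolding q2 .
      qed
      then show "0 \<le> Re (qf n \<rho>' v)" using P unfolding psd_def by simp
    qed
    have Z': "\<forall>r<n. \<forall>c<n. (r < n - j \<or> c < n - j) \<longrightarrow> \<rho>' r c = 0"
    proof (intro allI impI)
      fix r c assume rc: "r < n" "c < n" "r < n - j \<or> c < n - j"
      then consider "r < p" | "c < p" | "r = p" | "c = p" using nj by linarith
      then show "\<rho>' r c = 0"
      proof cases
        case 1
        then have "\<rho> r c = 0" "\<rho> r p = 0" using Z rc p_def pn by auto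
        then show ?thesis by (simp add: \<rho>'_def y_def)
      next
        case 2
        then have "\<rho> r c = 0" "\<rho> c p = 0" using Z rc p_def pn by auto
        then show ?thesis by (simp add: \<rho>'_def y_def)
      next
        case 3
        then show ?thesis unfolding \<rho>'_def using yy[OF pn rc(2)] pa a0 by simp
      next
        case 4
        then show ?thesis unfolding \<rho>'_def using yy[OF rc(1) pn] pa a0 by simp
      qed
    qed
    obtain x where x: "\<forall>r<n. \<forall>c<n. \<rho>' r c = (\<Sum>k<j. x k r * cnj (x k c))"
      using Suc.IH[OF jn H' P' Z'] by blast
    show ?thesis
    proof (rule exI[of _ "x(j := y)"], intro allI impI)
      fix r c assume "r < n" "c < n"
      then show "\<rho> r c = (\<Sum>k<Suc j. (x(j := y)) k r * cnj ((x(j := y)) k c))"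
      proof -
        have "\<rho> r c - y r * cnj (y c) = (\<Sum>k<j. x k r * cnj (x k c))" using x \<open>r<n\<close> \<open>c<n\<close> by (simp add: \<rho>'_def)
        then show ?thesis unfolding sum_lessThan_Suc_upd by (simp add: diff_eq_eq)
      qed
    qed
  qed
qed

lemma gram:
  assumes "herm n \<rho>" "psd n \<rho>"
  shows "\<exists>x. \<forall>r<n. \<forall>c<n. \<rho> r c = (\<Sum>k<n. x k r * cnj (x k c))"
  using gram_aux[of n n \<rho>] assms by auto



lemma sum_lessThan_add: "(\<Sum>r<m+(k::nat). f r) = (\<Sum>r<m. f r) + (\<Sum>a<k. f (m + a))"
  by (induction k) (simp_all add: add.assoc)

lemma sum_split_prod: "(\<Sum>r<(d1::nat)*d2. f r) = (\<Sum>i<d1. \<Sum>a<d2. f (i*d2+a))"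
proof (induction d1)
  case 0 then show ?case by simp
next
  case (Suc d1)
  have "(\<Sum>r<Suc d1*d2. f r) = (\<Sum>r<d1*d2 + d2. f r)" by (simp add: add.commute)
  also have "\<dots> = (\<Sum>r<d1*d2. f r) + (\<Sum>a<d2. f (d1*d2 + a))" by (rule sum_lessThan_add)
  finally show ?case using Suc by simp
qed

lemma prim_norm: assumes "primitive_root d w" "d \<ge> 1" shows "cmod w = 1"
proof -
  have "cmod w ^ d = 1" using assms unfolding primitive_root_def by (metis norm_one norm_power)
  then have "cmod w ^ d = 1 ^ d" by simp
  moreover have "0 < d" using assms(2) by simp
  ultimately show ?thesis using power_eq_imp_eq_base[OF _ norm_ge_zero zero_le_one] by blast
qed

lemma prim_cnj: assumes "primitive_root d w" "d \<ge> 1" shows "cnj w = inverse w" and "w \<noteq> 0"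
proof -
  have n: "cmod w = 1" by (rule prim_norm[OF assms])
  then show "w \<noteq> 0" by auto
  have "w * cnj w = 1" using n complex_norm_square[of w] by simp
  then show "cnj w = inverse w" by (metis inverse_unique)
qed

lemma char_sum:
  assumes pr: "primitive_root d w" and d: "d \<ge> 1" and m: "m < d" and m': "m' < d"
  shows "(\<Sum>i<d. cnj (w ^ (i*m)) * w ^ (i*m')) = (if m = m' then of_nat d else 0)"
proof -
  have cw: "cnj w = inverse w" and w0: "w \<noteq> 0" using prim_cnj[OF pr d] by auto
  define q where "q = w ^ m' / w ^ m"
  have e: "cnj (w ^ (i*m)) * w ^ (i*m') = q ^ i" for i
  proof -
    have a: "cnj (w ^ (i*m)) = inverse ((w ^ m) ^ i)" by (simp add: cw power_inverse) (metis power_mult mult.commute)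
    have b: "w ^ (i*m') = (w ^ m') ^ i" by (metis power_mult mult.commute)
    have c: "q ^ i = (w ^ m') ^ i / (w ^ m) ^ i" by (simp add: q_def power_divide)
    show ?thesis unfolding a b c by (simp add: divide_inverse mult.commute)
  qed
  have wd: "w ^ d = 1" using pr unfolding primitive_root_def by simp
  show ?thesis
  proof (cases "m = m'")
    case True
    then have "q = 1" using w0 by (simp add: q_def)
    then show ?thesis using True e by simp
  next
    case False
    have q1: "q \<noteq> 1"
    proof
      assume "q = 1"
      then have eq: "w ^ m' = w ^ m" using w0 by (simp add: q_def)
      show False
      proof (cases "m < m'")
        case True
        then have "w ^ m * w ^ (m' - m) = w ^ m * 1" using eq by (simp flip: power_add)
        then have "w ^ (m' - m) = 1" using w0 by simp
        then show False using pr True m' unfolding primitive_root_def by auto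
      next
        case False
        then have "m' < m" using \<open>m \<noteq> m'\<close> by simp
        then have "w ^ m' * w ^ (m - m') = w ^ m" by (simp flip: power_add)
        then have "w ^ m' * w ^ (m - m') = w ^ m' * 1" using eq by simp
        then have "w ^ (m - m') = 1" using w0 by simp
        then show False using pr \<open>m' < m\<close> m unfolding primitive_root_def by auto
      qed
    qed
    have qd: "q ^ d = 1" unfolding q_def power_divide
      by (simp flip: power_mult add: mult.commute[of _ d] power_mult wd)
    have "(\<Sum>i<d. q ^ i) = 0" using geometric_sum[OF q1, of d] qd by simp
    then show ?thesis using False e by simp
  qed
qed

lemma mod_shift_unique:
  fixes d m j j' :: nat
  assumes "j < d" "j' < d" "(m + j) mod d = (m + j') mod d"
  shows "j = j'"
proof (rule ccontr)
  assume ne: "j \<noteq> j'"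
  show False
  proof (cases "j < j'")
    case True
    then have "d dvd (m + j') - (m + j)" using assms(3) mod_eq_dvd_iff_nat[of "m+j" "m+j'" d] by simp
    then have "d dvd j' - j" by simp
    moreover have "0 < j' - j" "j' - j < d" using True assms by auto
    ultimately show False using nat_dvd_not_less by blast
  next
    case False
    then have lt: "j' < j" using ne by simp
    then have "d dvd (m + j) - (m + j')" using assms(3) mod_eq_dvd_iff_nat[of "m+j'" "m+j" d] by simp
    then have "d dvd j - j'" by simp
    moreover have "0 < j - j'" "j - j' < d" using lt assms by auto
    ultimately show False using nat_dvd_not_less by blast
  qed
qed

lemma count_one:
  fixes d m n :: nat
  assumes "m < d" "n < d"
  shows "(\<Sum>j<d. if n = (m + j) mod d then c else 0) = c"
proof -
  define j0 where "j0 = (n + d - m) mod d"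
  have j0d: "j0 < d" using assms by (simp add: j0_def)
  have "(m + j0) mod d = (m + (n + d - m)) mod d" unfolding j0_def by (simp add: mod_add_right_eq)
  also have "m + (n + d - m) = n + d" using assms by simp
  finally have hj0: "(m + j0) mod d = n" using assms by simp
  have "(\<Sum>j<d. if n = (m + j) mod d then c else 0) = (\<Sum>j<d. if j = j0 then c else 0)"
  proof (rule sum.cong)
    fix j assume "j \<in> {..<d}"
    then have "j < d" by simp
    have "n = (m + j) mod d \<Longrightarrow> j = j0"
    proof -
      assume "n = (m + j) mod d"
      then have "(m + j) mod d = (m + j0) mod d" using hj0 by simp
      then show "j = j0" by (rule mod_shift_unique[OF \<open>j < d\<close> j0d])
    qed
    then have "n = (m + j) mod d \<longleftrightarrow> j = j0" using hj0 by blast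
    then show "(if n = (m + j) mod d then c else 0) = (if j = j0 then c else 0)" by simp
  qed simp
  also have "\<dots> = c" using j0d by simp
  finally show ?thesis .
qed

lemma gpauli_split:
  assumes "m < d" "n < d" "j < d"
  shows "gpauli d w (i*d+j) m n = (if n = (m + j) mod d then w ^ (i*m) else 0)"
proof -
  have "(i*d+j) mod d = j" "(i*d+j) div d = i" using assms by auto
  then show ?thesis using assms unfolding gpauli_def by simp
qed

lemma sum_if_const: "(\<Sum>i\<in>A. if P then f i else 0) = (if P then sum f A else 0)"
  by (cases P) auto

lemma pauli_complete:
  assumes pr: "primitive_root d w" and d: "d \<ge> 1"
    and mn: "m < d" "n < d" "m' < d" "n' < d"
  shows "(\<Sum>u<d^2. cnj (gpauli d w u m n) * gpauli d w u m' n') = (if m = m' \<and> n = n' then of_nat d else 0)"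
proof -
  have "(\<Sum>u<d^2. cnj (gpauli d w u m n) * gpauli d w u m' n')
      = (\<Sum>i<d. \<Sum>j<d. cnj (gpauli d w (i*d+j) m n) * gpauli d w (i*d+j) m' n')"
    by (simp add: power2_eq_square sum_split_prod)
  also have "\<dots> = (\<Sum>i<d. \<Sum>j<d. if n = (m + j) mod d \<and> n' = (m' + j) mod d then cnj (w ^ (i*m)) * w ^ (i*m') else 0)"
    by (intro sum.cong refl) (simp add: gpauli_split mn)
  also have "\<dots> = (\<Sum>j<d. \<Sum>i<d. if n = (m + j) mod d \<and> n' = (m' + j) mod d then cnj (w ^ (i*m)) * w ^ (i*m') else 0)"
    by (rule sum.swap)
  also have "\<dots> = (\<Sum>j<d. if n = (m + j) mod d \<and> n' = (m' + j) mod d then (if m = m' then of_nat d else 0) else 0)"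
  proof (intro sum.cong refl)
    fix j
    show "(\<Sum>i<d. if n = (m + j) mod d \<and> n' = (m' + j) mod d then cnj (w ^ (i*m)) * w ^ (i*m') else 0)
      = (if n = (m + j) mod d \<and> n' = (m' + j) mod d then (if m = m' then of_nat d else 0) else 0)"
      by (simp only: sum_if_const char_sum[OF pr d mn(1) mn(3)])
  qed
  also have "\<dots> = (if m = m' \<and> n = n' then of_nat d else 0)"
  proof (cases "m = m' \<and> n = n'")
    case True
    then show ?thesis using count_one[OF mn(1) mn(2), of "of_nat d"] by simp
  next
    case False
    have "(if n = (m + j) mod d \<and> n' = (m' + j) mod d then (if m = m' then of_nat d else 0) else 0) = (0::complex)" for j
      using False by auto
    then have s0: "(\<Sum>j<d. if n = (m + j) mod d \<and> n' = (m' + j) mod d then (if m = m' then of_nat d else 0) else 0) = (0::complex)"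
      by simp
    have "(if m = m' \<and> n = n' then of_nat d else 0) = (0::complex)" using False by auto
    then show ?thesis using s0 by simp
  qed
  finally show ?thesis .
qed



lemma parseval_gen:
  assumes finU: "finite U" and finI: "finite I"
    and comp: "\<And>p q. p \<in> I \<Longrightarrow> q \<in> I \<Longrightarrow> (\<Sum>u\<in>U. cnj (B u p) * B u q) = (if p = q then N else 0)"
  shows "(\<Sum>u\<in>U. (\<Sum>p\<in>I. X p * cnj (B u p)) * cnj (\<Sum>p\<in>I. X p * cnj (B u p)))
         = N * (\<Sum>p\<in>I. X p * cnj (X p))"
proof -
  have e1: "(\<Sum>p\<in>I. X p * cnj (B u p)) * cnj (\<Sum>p\<in>I. X p * cnj (B u p))
      = (\<Sum>p\<in>I. \<Sum>q\<in>I. (X p * cnj (X q)) * (cnj (B u p) * B u q))" for u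
    by (simp add: cnj_sum sum_product algebra_simps)
  have "(\<Sum>u\<in>U. \<Sum>p\<in>I. \<Sum>q\<in>I. (X p * cnj (X q)) * (cnj (B u p) * B u q))
      = (\<Sum>p\<in>I. \<Sum>u\<in>U. \<Sum>q\<in>I. (X p * cnj (X q)) * (cnj (B u p) * B u q))"
    by (rule sum.swap)
  also have "\<dots> = (\<Sum>p\<in>I. \<Sum>q\<in>I. \<Sum>u\<in>U. (X p * cnj (X q)) * (cnj (B u p) * B u q))"
    by (intro sum.cong refl) (rule sum.swap)
  also have "\<dots> = (\<Sum>p\<in>I. \<Sum>q\<in>I. (X p * cnj (X q)) * (if p = q then N else 0))"
    by (intro sum.cong refl) (simp add: comp flip: sum_distrib_left)
  also have "\<dots> = (\<Sum>p\<in>I. X p * cnj (X p) * N)"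
  proof (intro sum.cong refl)
    fix p assume "p \<in> I"
    have "(\<Sum>q\<in>I. (X p * cnj (X q)) * (if p = q then N else 0)) = (\<Sum>q\<in>I. if p = q then X p * cnj (X q) * N else 0)"
      by (rule sum.cong) auto
    also have "\<dots> = X p * cnj (X p) * N" using \<open>p \<in> I\<close> finI by simp
    finally show "(\<Sum>q\<in>I. (X p * cnj (X q)) * (if p = q then N else 0)) = X p * cnj (X p) * N" .
  qed
  finally show ?thesis unfolding e1 by (simp add: sum_distrib_left mult.commute)
qed

lemma div_mod_eq_iff: "(r::nat) = r' \<longleftrightarrow> r div d = r' div d \<and> r mod d = r' mod d"
  by (metis div_mult_mod_eq)

lemma sum_pairs: "(\<Sum>p\<in>{..<(n::nat)}\<times>{..<m}. f p) = (\<Sum>r<n. \<Sum>c<m. f (r, c))"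
  by (simp add: sum.cartesian_product)

lemma pauli_parseval:
  assumes pr: "primitive_root d w" and d: "d \<ge> 1"
  shows "(\<Sum>u<d^2. (\<Sum>m<d. \<Sum>n<d. X m n * cnj (gpauli d w u m n)) * cnj (\<Sum>m<d. \<Sum>n<d. X m n * cnj (gpauli d w u m n)))
         = of_nat d * (\<Sum>m<d. \<Sum>n<d. X m n * cnj (X m n))"
proof -
  have "(\<Sum>u\<in>{..<d^2}. (\<Sum>p\<in>{..<d}\<times>{..<d}. (\<lambda>(m,n). X m n) p * cnj ((\<lambda>u (m,n). gpauli d w u m n) u p))
      * cnj (\<Sum>p\<in>{..<d}\<times>{..<d}. (\<lambda>(m,n). X m n) p * cnj ((\<lambda>u (m,n). gpauli d w u m n) u p)))
      = of_nat d * (\<Sum>p\<in>{..<d}\<times>{..<d}. (\<lambda>(m,n). X m n) p * cnj ((\<lambda>(m,n). X m n) p))"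
  proof (rule parseval_gen)
    fix p q assume "p \<in> {..<d}\<times>{..<d}" "q \<in> {..<d}\<times>{..<d}"
    then obtain m n m' n' where pq: "p = (m,n)" "q = (m',n')" "m < d" "n < d" "m' < d" "n' < d" by auto
    show "(\<Sum>u\<in>{..<d^2}. cnj ((\<lambda>u (m,n). gpauli d w u m n) u p) * (\<lambda>u (m,n). gpauli d w u m n) u q) = (if p = q then of_nat d else 0)"
      using pauli_complete[OF pr d pq(3-6)] pq(1,2) by simp
  qed auto
  then show ?thesis by (simp add: sum_pairs)
qed

definition kt :: "nat \<Rightarrow> nat \<Rightarrow> complex \<Rightarrow> complex \<Rightarrow> nat \<Rightarrow> nat \<Rightarrow> nat \<Rightarrow> nat \<Rightarrow> complex" where
  "kt d1 d2 w1 w2 u1 u2 = kron d1 d2 (gpauli d1 w1 u1) (gpauli d2 w2 u2)"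

lemma tensor_complete:
  assumes pr1: "primitive_root d1 w1" and d1: "d1 \<ge> 1" and pr2: "primitive_root d2 w2" and d2: "d2 \<ge> 1"
    and rc: "r < d1*d2" "c < d1*d2" "r' < d1*d2" "c' < d1*d2"
  shows "(\<Sum>u\<in>{..<d1^2}\<times>{..<d2^2}. cnj (kt d1 d2 w1 w2 (fst u) (snd u) r c) * kt d1 d2 w1 w2 (fst u) (snd u) r' c')
         = (if r = r' \<and> c = c' then of_nat (d1*d2) else 0)"
proof -
  have dv: "r div d2 < d1" "c div d2 < d1" "r' div d2 < d1" "c' div d2 < d1"
    using rc by (auto simp: less_mult_imp_div_less mult.commute)
  have md: "r mod d2 < d2" "c mod d2 < d2" "r' mod d2 < d2" "c' mod d2 < d2" using d2 by auto
  have "(\<Sum>u\<in>{..<d1^2}\<times>{..<d2^2}. cnj (kt d1 d2 w1 w2 (fst u) (snd u) r c) * kt d1 d2 w1 w2 (fst u) (snd u) r' c')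
     = (\<Sum>u1<d1^2. \<Sum>u2<d2^2. (cnj (gpauli d1 w1 u1 (r div d2) (c div d2)) * gpauli d1 w1 u1 (r' div d2) (c' div d2))
          * (cnj (gpauli d2 w2 u2 (r mod d2) (c mod d2)) * gpauli d2 w2 u2 (r' mod d2) (c' mod d2)))"
    unfolding sum_pairs kt_def kron_def using rc by (simp add: algebra_simps)
  also have "\<dots> = (\<Sum>u1<d1^2. cnj (gpauli d1 w1 u1 (r div d2) (c div d2)) * gpauli d1 w1 u1 (r' div d2) (c' div d2))
          * (\<Sum>u2<d2^2. cnj (gpauli d2 w2 u2 (r mod d2) (c mod d2)) * gpauli d2 w2 u2 (r' mod d2) (c' mod d2))"
    by (simp add: sum_product)
  also have "\<dots> = (if r div d2 = r' div d2 \<and> c div d2 = c' div d2 then of_nat d1 else 0)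
                   * (if r mod d2 = r' mod d2 \<and> c mod d2 = c' mod d2 then of_nat d2 else 0)"
    by (simp only: pauli_complete[OF pr1 d1 dv] pauli_complete[OF pr2 d2 md])
  also have "\<dots> = (if r = r' \<and> c = c' then of_nat (d1*d2) else 0)"
    using div_mod_eq_iff[of r r' d2] div_mod_eq_iff[of c c' d2] by auto
  finally show ?thesis .
qed

lemma tensor_parseval:
  assumes pr1: "primitive_root d1 w1" and d1: "d1 \<ge> 1" and pr2: "primitive_root d2 w2" and d2: "d2 \<ge> 1"
  shows "(\<Sum>u1<d1^2. \<Sum>u2<d2^2. (\<Sum>r<d1*d2. \<Sum>c<d1*d2. X r c * cnj (kt d1 d2 w1 w2 u1 u2 r c))
            * cnj (\<Sum>r<d1*d2. \<Sum>c<d1*d2. X r c * cnj (kt d1 d2 w1 w2 u1 u2 r c)))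
         = of_nat (d1*d2) * (\<Sum>r<d1*d2. \<Sum>c<d1*d2. X r c * cnj (X r c))"
proof -
  let ?D = "d1*d2"
  have "(\<Sum>u\<in>{..<d1^2}\<times>{..<d2^2}. (\<Sum>p\<in>{..<?D}\<times>{..<?D}. (\<lambda>(r,c). X r c) p * cnj ((\<lambda>u (r,c). kt d1 d2 w1 w2 (fst u) (snd u) r c) u p))
      * cnj (\<Sum>p\<in>{..<?D}\<times>{..<?D}. (\<lambda>(r,c). X r c) p * cnj ((\<lambda>u (r,c). kt d1 d2 w1 w2 (fst u) (snd u) r c) u p)))
      = of_nat ?D * (\<Sum>p\<in>{..<?D}\<times>{..<?D}. (\<lambda>(r,c). X r c) p * cnj ((\<lambda>(r,c). X r c) p))"
  proof (rule parseval_gen)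
    fix p q assume "p \<in> {..<?D}\<times>{..<?D}" "q \<in> {..<?D}\<times>{..<?D}"
    then obtain r c r' c' where pq: "p = (r,c)" "q = (r',c')" "r < ?D" "c < ?D" "r' < ?D" "c' < ?D" by auto
    show "(\<Sum>u\<in>{..<d1^2}\<times>{..<d2^2}. cnj ((\<lambda>u (r,c). kt d1 d2 w1 w2 (fst u) (snd u) r c) u p) * (\<lambda>u (r,c). kt d1 d2 w1 w2 (fst u) (snd u) r c) u q) = (if p = q then of_nat ?D else 0)"
      using tensor_complete[OF pr1 d1 pr2 d2 pq(3-6)] pq(1,2) by simp
  qed auto
  then show ?thesis by (simp add: sum_pairs)
qed



lemma idA_c:
  assumes "finite P" "finite K"
  shows "(\<Sum>p\<in>P. \<Sum>q\<in>P. (\<Sum>k\<in>K. X k p * cnj (X k q)) * cnj (\<Sum>k\<in>K. X k p * cnj (X k q)))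
       = (\<Sum>k\<in>K. \<Sum>l\<in>K. (\<Sum>p\<in>P. X k p * cnj (X l p)) * cnj (\<Sum>p\<in>P. X k p * cnj (X l p)))"
proof -
  define F where "F = (\<lambda>p q k l. (X k p * cnj (X l p)) * (cnj (X k q) * X l q))"
  have L: "(\<Sum>k\<in>K. X k p * cnj (X k q)) * cnj (\<Sum>k\<in>K. X k p * cnj (X k q)) = (\<Sum>k\<in>K. \<Sum>l\<in>K. F p q k l)" for p q
    by (simp add: F_def cnj_sum sum_product algebra_simps)
  have R: "(\<Sum>p\<in>P. X k p * cnj (X l p)) * cnj (\<Sum>p\<in>P. X k p * cnj (X l p)) = (\<Sum>p\<in>P. \<Sum>q\<in>P. F p q k l)" for k l
    by (simp add: F_def cnj_sum sum_product algebra_simps)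
  have "(\<Sum>p\<in>P. \<Sum>q\<in>P. \<Sum>k\<in>K. \<Sum>l\<in>K. F p q k l) = (\<Sum>p\<in>P. \<Sum>k\<in>K. \<Sum>q\<in>P. \<Sum>l\<in>K. F p q k l)"
    by (intro sum.cong refl) (rule sum.swap)
  also have "\<dots> = (\<Sum>k\<in>K. \<Sum>p\<in>P. \<Sum>q\<in>P. \<Sum>l\<in>K. F p q k l)" by (rule sum.swap)
  also have "\<dots> = (\<Sum>k\<in>K. \<Sum>p\<in>P. \<Sum>l\<in>K. \<Sum>q\<in>P. F p q k l)"
    by (intro sum.cong refl) (rule sum.swap)
  also have "\<dots> = (\<Sum>k\<in>K. \<Sum>l\<in>K. \<Sum>p\<in>P. \<Sum>q\<in>P. F p q k l)"
    by (intro sum.cong refl) (rule sum.swap)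
  finally show ?thesis unfolding L R .
qed

lemma idA:
  assumes "finite P" "finite K"
  shows "(\<Sum>p\<in>P. \<Sum>q\<in>P. (cmod (\<Sum>k\<in>K. X k p * cnj (X k q)))^2)
       = (\<Sum>k\<in>K. \<Sum>l\<in>K. (cmod (\<Sum>p\<in>P. X k p * cnj (X l p)))^2)"
proof -
  have "complex_of_real (\<Sum>p\<in>P. \<Sum>q\<in>P. (cmod (\<Sum>k\<in>K. X k p * cnj (X k q)))^2)
      = complex_of_real (\<Sum>k\<in>K. \<Sum>l\<in>K. (cmod (\<Sum>p\<in>P. X k p * cnj (X l p)))^2)"
    unfolding of_real_sum complex_norm_square using idA_c[OF assms] by simp
  then show ?thesis using of_real_eq_iff by blast
qed

lemma cs_complex:
  "(cmod (\<Sum>r\<in>A. a r * cnj (b r)))^2 \<le> (\<Sum>r\<in>A. (cmod (a r))^2) * (\<Sum>r\<in>A. (cmod (b r))^2)"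
proof -
  have "cmod (\<Sum>r\<in>A. a r * cnj (b r)) \<le> (\<Sum>r\<in>A. cmod (a r) * cmod (b r))"
    by (rule order_trans[OF norm_sum]) (simp add: norm_mult)
  then have "(cmod (\<Sum>r\<in>A. a r * cnj (b r)))^2 \<le> (\<Sum>r\<in>A. cmod (a r) * cmod (b r))^2"
    by (rule power_mono) simp
  also have "\<dots> \<le> (\<Sum>r\<in>A. (cmod (a r))^2) * (\<Sum>r\<in>A. (cmod (b r))^2)"
    by (rule Cauchy_Schwarz_ineq_sum)
  finally show ?thesis .
qed

lemma cs_ones:
  "(cmod (\<Sum>i<n. z i))^2 \<le> real n * (\<Sum>i<n. (cmod (z i))^2)"
proof -
  have "cmod (\<Sum>i<n. z i) \<le> (\<Sum>i<n. 1 * cmod (z i))" by (simp add: norm_sum)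
  then have "(cmod (\<Sum>i<n. z i))^2 \<le> (\<Sum>i<n. 1 * cmod (z i))^2"
    by (rule power_mono) simp
  also have "\<dots> \<le> (\<Sum>i<n. 1^2) * (\<Sum>i<n. (cmod (z i))^2)"
    by (rule Cauchy_Schwarz_ineq_sum)
  finally show ?thesis by simp
qed

lemma sum_prod_set: "(\<Sum>m\<in>A\<times>B. f m) = (\<Sum>a\<in>A. \<Sum>b\<in>B. f (a,b))"
  by (simp add: sum.cartesian_product)

lemma diag_ineq:
  assumes "finite K"
  shows "(\<Sum>k\<in>K. \<Sum>l\<in>K. (cmod (\<Sum>i<n. Z k l i i))^2)
     \<le> real n * (\<Sum>m\<in>{..<n}\<times>K. \<Sum>m'\<in>{..<n}\<times>K. (cmod (Z (snd m) (snd m') (fst m) (fst m')))^2)"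
proof -
  have "(\<Sum>k\<in>K. \<Sum>l\<in>K. (cmod (\<Sum>i<n. Z k l i i))^2) \<le> (\<Sum>k\<in>K. \<Sum>l\<in>K. real n * (\<Sum>i<n. \<Sum>j<n. (cmod (Z k l i j))^2))"
  proof (intro sum_mono)
    fix k l
    have "(\<Sum>i<n. (cmod (Z k l i i))^2) \<le> (\<Sum>i<n. \<Sum>j<n. (cmod (Z k l i j))^2)"
    proof (rule sum_mono)
      fix i assume "i \<in> {..<n}"
      then show "(cmod (Z k l i i))^2 \<le> (\<Sum>j<n. (cmod (Z k l i j))^2)"
        by (intro member_le_sum) auto
    qed
    then show "(cmod (\<Sum>i<n. Z k l i i))^2 \<le> real n * (\<Sum>i<n. \<Sum>j<n. (cmod (Z k l i j))^2)"
      using cs_ones[of "\<lambda>i. Z k l i i" n] by (meson mult_left_mono of_nat_0_le_iff order_trans)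
  qed
  also have "\<dots> = real n * (\<Sum>k\<in>K. \<Sum>l\<in>K. \<Sum>i<n. \<Sum>j<n. (cmod (Z k l i j))^2)"
    by (simp add: sum_distrib_left)
  also have "(\<Sum>k\<in>K. \<Sum>l\<in>K. \<Sum>i<n. \<Sum>j<n. (cmod (Z k l i j))^2) = (\<Sum>i<n. \<Sum>k\<in>K. \<Sum>j<n. \<Sum>l\<in>K. (cmod (Z k l i j))^2)"
  proof -
    have "(\<Sum>k\<in>K. \<Sum>l\<in>K. \<Sum>i<n. \<Sum>j<n. (cmod (Z k l i j))^2) = (\<Sum>k\<in>K. \<Sum>i<n. \<Sum>l\<in>K. \<Sum>j<n. (cmod (Z k l i j))^2)"
      by (intro sum.cong refl) (rule sum.swap)
    also have "\<dots> = (\<Sum>i<n. \<Sum>k\<in>K. \<Sum>l\<in>K. \<Sum>j<n. (cmod (Z k l i j))^2)" by (rule sum.swap)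
    also have "\<dots> = (\<Sum>i<n. \<Sum>k\<in>K. \<Sum>j<n. \<Sum>l\<in>K. (cmod (Z k l i j))^2)"
      by (intro sum.cong refl) (rule sum.swap)
    finally show ?thesis .
  qed
  also have "\<dots> = (\<Sum>m\<in>{..<n}\<times>K. \<Sum>m'\<in>{..<n}\<times>K. (cmod (Z (snd m) (snd m') (fst m) (fst m')))^2)"
    by (simp only: sum_prod_set) simp
  finally show ?thesis .
qed



lemma idx_facts:
  fixes i a d1 d2 :: nat
  assumes "i < d1" "a < d2"
  shows "i*d2+a < d1*d2" "(i*d2+a) div d2 = i" "(i*d2+a) mod d2 = a"
proof -
  have "i*d2+a < i*d2 + d2" using assms by simp
  also have "\<dots> = (i+1)*d2" by simp
  also have "\<dots> \<le> d1*d2" using assms(1) by (intro mult_right_mono) auto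
  finally show "i*d2+a < d1*d2" .
  show "(i*d2+a) div d2 = i" "(i*d2+a) mod d2 = a" using assms by auto
qed

lemma kt_split:
  assumes "i < d1" "j < d1" "a < d2" "b < d2"
  shows "kt d1 d2 w1 w2 u1 u2 (i*d2+a) (j*d2+b) = gpauli d1 w1 u1 i j * gpauli d2 w2 u2 a b"
  using idx_facts[OF assms(1,3)] idx_facts[OF assms(2,4)] unfolding kt_def kron_def by simp

lemma gpauli_zero: "m < d \<Longrightarrow> n < d \<Longrightarrow> gpauli d w 0 m n = (if m = n then 1 else 0)"
  unfolding gpauli_def by auto

lemma corr_eq:
  "corr d1 d2 w1 w2 \<rho> u1 u2 = (\<Sum>r<d1*d2. \<Sum>c<d1*d2. \<rho> r c * cnj (kt d1 d2 w1 w2 u1 u2 r c))"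
  unfolding corr_def mtrace_def mmult_def
proof (intro sum.cong refl)
  fix r c assume "r \<in> {..<d1*d2}" "c \<in> {..<d1*d2}"
  then show "\<rho> r c * kron d1 d2 (adj (gpauli d1 w1 u1)) (adj (gpauli d2 w2 u2)) c r = \<rho> r c * cnj (kt d1 d2 w1 w2 u1 u2 r c)"
    unfolding kt_def kron_def adj_def by simp
qed

lemma corr_split:
  "corr d1 d2 w1 w2 \<rho> u1 u2 = (\<Sum>i<d1. \<Sum>a<d2. \<Sum>j<d1. \<Sum>b<d2.
      \<rho> (i*d2+a) (j*d2+b) * cnj (gpauli d1 w1 u1 i j * gpauli d2 w2 u2 a b))"
  unfolding corr_eq sum_split_prod
  by (intro sum.cong refl) (simp add: kt_split)

lemma corr_0u:
  "corr d1 d2 w1 w2 \<rho> 0 u2 = (\<Sum>a<d2. \<Sum>b<d2. (\<Sum>i<d1. \<rho> (i*d2+a) (i*d2+b)) * cnj (gpauli d2 w2 u2 a b))"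
proof -
  have "corr d1 d2 w1 w2 \<rho> 0 u2 = (\<Sum>i<d1. \<Sum>a<d2. \<Sum>j<d1. \<Sum>b<d2.
      (if j = i then \<rho> (i*d2+a) (j*d2+b) * cnj (gpauli d2 w2 u2 a b) else 0))"
    unfolding corr_split by (intro sum.cong refl) (auto simp: gpauli_zero)
  also have "\<dots> = (\<Sum>i<d1. \<Sum>a<d2. \<Sum>b<d2. \<Sum>j<d1.
      (if j = i then \<rho> (i*d2+a) (j*d2+b) * cnj (gpauli d2 w2 u2 a b) else 0))"
    by (rule sum.cong[OF refl], rule sum.cong[OF refl], rule sum.swap)
  also have "\<dots> = (\<Sum>i<d1. \<Sum>a<d2. \<Sum>b<d2. \<rho> (i*d2+a) (i*d2+b) * cnj (gpauli d2 w2 u2 a b))"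
    by (intro sum.cong refl) simp
  also have "\<dots> = (\<Sum>a<d2. \<Sum>i<d1. \<Sum>b<d2. \<rho> (i*d2+a) (i*d2+b) * cnj (gpauli d2 w2 u2 a b))"
    by (rule sum.swap)
  also have "\<dots> = (\<Sum>a<d2. \<Sum>b<d2. \<Sum>i<d1. \<rho> (i*d2+a) (i*d2+b) * cnj (gpauli d2 w2 u2 a b))"
    by (rule sum.cong[OF refl], rule sum.swap)
  also have "\<dots> = (\<Sum>a<d2. \<Sum>b<d2. (\<Sum>i<d1. \<rho> (i*d2+a) (i*d2+b)) * cnj (gpauli d2 w2 u2 a b))"
    by (simp add: sum_distrib_right)
  finally show ?thesis .
qed

lemma corr_u0:
  "corr d1 d2 w1 w2 \<rho> u1 0 = (\<Sum>i<d1. \<Sum>j<d1. (\<Sum>a<d2. \<rho> (i*d2+a) (j*d2+a)) * cnj (gpauli d1 w1 u1 i j))"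
proof -
  have "corr d1 d2 w1 w2 \<rho> u1 0 = (\<Sum>i<d1. \<Sum>a<d2. \<Sum>j<d1. \<Sum>b<d2.
      (if b = a then \<rho> (i*d2+a) (j*d2+b) * cnj (gpauli d1 w1 u1 i j) else 0))"
    unfolding corr_split by (intro sum.cong refl) (auto simp: gpauli_zero)
  also have "\<dots> = (\<Sum>i<d1. \<Sum>a<d2. \<Sum>j<d1. \<rho> (i*d2+a) (j*d2+a) * cnj (gpauli d1 w1 u1 i j))"
    by (intro sum.cong refl) simp
  also have "\<dots> = (\<Sum>i<d1. \<Sum>j<d1. \<Sum>a<d2. \<rho> (i*d2+a) (j*d2+a) * cnj (gpauli d1 w1 u1 i j))"
    by (rule sum.cong[OF refl], rule sum.swap)
  also have "\<dots> = (\<Sum>i<d1. \<Sum>j<d1. (\<Sum>a<d2. \<rho> (i*d2+a) (j*d2+a)) * cnj (gpauli d1 w1 u1 i j))"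
    by (simp add: sum_distrib_right)
  finally show ?thesis .
qed

lemma corr_00:
  "corr d1 d2 w1 w2 \<rho> 0 0 = mtrace (d1*d2) \<rho>"
proof -
  have "corr d1 d2 w1 w2 \<rho> 0 0 = (\<Sum>a<d2. \<Sum>b<d2. (if a = b then (\<Sum>i<d1. \<rho> (i*d2+a) (i*d2+b)) else 0))"
    unfolding corr_0u by (intro sum.cong refl) (auto simp: gpauli_zero)
  also have "\<dots> = (\<Sum>a<d2. \<Sum>i<d1. \<rho> (i*d2+a) (i*d2+a))" by simp
  also have "\<dots> = (\<Sum>i<d1. \<Sum>a<d2. \<rho> (i*d2+a) (i*d2+a))" by (rule sum.swap)
  also have "\<dots> = mtrace (d1*d2) \<rho>" unfolding mtrace_def sum_split_prod ..
  finally show ?thesis .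
qed

lemma N_gram:
  fixes d1 d2 :: nat and \<rho> x :: "nat \<Rightarrow> nat \<Rightarrow> complex"
  assumes g: "\<forall>r<d1*d2. \<forall>c<d1*d2. \<rho> r c = (\<Sum>k<d1*d2. x k r * cnj (x k c))"
  shows "(\<Sum>r<d1*d2. \<Sum>c<d1*d2. (cmod (\<rho> r c))^2)
      = (\<Sum>k<d1*d2. \<Sum>l<d1*d2. (cmod (\<Sum>r<d1*d2. x k r * cnj (x l r)))^2)"
proof -
  have "(\<Sum>r<d1*d2. \<Sum>c<d1*d2. (cmod (\<rho> r c))^2)
      = (\<Sum>r<d1*d2. \<Sum>c<d1*d2. (cmod (\<Sum>k<d1*d2. x k r * cnj (x k c)))^2)"
    using g by (intro sum.cong refl) simp
  also have "\<dots> = (\<Sum>k<d1*d2. \<Sum>l<d1*d2. (cmod (\<Sum>r<d1*d2. x k r * cnj (x l r)))^2)"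
    by (rule idA) auto
  finally show ?thesis .
qed

lemma ineq_N2:
  fixes d1 d2 :: nat and \<rho> x :: "nat \<Rightarrow> nat \<Rightarrow> complex"
  assumes g: "\<forall>r<d1*d2. \<forall>c<d1*d2. \<rho> r c = (\<Sum>k<d1*d2. x k r * cnj (x k c))"
  shows "(\<Sum>r<d1*d2. \<Sum>c<d1*d2. (cmod (\<rho> r c))^2)
      \<le> real d1 * (\<Sum>a<d2. \<Sum>b<d2. (cmod (\<Sum>i<d1. \<rho> (i*d2+a) (i*d2+b)))^2)"
proof -
  let ?K = "{..<d1*d2}"
  define Z where "Z = (\<lambda>k l i j. \<Sum>a<d2. x k (i*d2+a) * cnj (x l (j*d2+a)))"
  define Y where "Y = (\<lambda>m a. x (snd m) (fst m * d2 + a))"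
  have "(\<Sum>r<d1*d2. \<Sum>c<d1*d2. (cmod (\<rho> r c))^2)
      = (\<Sum>k\<in>?K. \<Sum>l\<in>?K. (cmod (\<Sum>i<d1. Z k l i i))^2)"
    unfolding N_gram[OF g] Z_def by (intro sum.cong refl) (simp only: sum_split_prod)
  also have "\<dots> \<le> real d1 * (\<Sum>m\<in>{..<d1}\<times>?K. \<Sum>m'\<in>{..<d1}\<times>?K. (cmod (Z (snd m) (snd m') (fst m) (fst m')))^2)"
    by (rule diag_ineq) simp
  also have "(\<Sum>m\<in>{..<d1}\<times>?K. \<Sum>m'\<in>{..<d1}\<times>?K. (cmod (Z (snd m) (snd m') (fst m) (fst m')))^2)
      = (\<Sum>m\<in>{..<d1}\<times>?K. \<Sum>m'\<in>{..<d1}\<times>?K. (cmod (\<Sum>a<d2. Y m a * cnj (Y m' a)))^2)"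
    unfolding Z_def Y_def ..
  also have "\<dots> = (\<Sum>a<d2. \<Sum>b<d2. (cmod (\<Sum>m\<in>{..<d1}\<times>?K. Y m a * cnj (Y m b)))^2)"
    by (rule idA[symmetric]) auto
  also have "\<dots> = (\<Sum>a<d2. \<Sum>b<d2. (cmod (\<Sum>i<d1. \<rho> (i*d2+a) (i*d2+b)))^2)"
  proof (intro sum.cong refl)
    fix a b assume ab: "a \<in> {..<d2}" "b \<in> {..<d2}"
    have "(\<Sum>m\<in>{..<d1}\<times>?K. Y m a * cnj (Y m b)) = (\<Sum>i<d1. \<Sum>k\<in>?K. x k (i*d2+a) * cnj (x k (i*d2+b)))"
      unfolding sum_prod_set Y_def by simp
    also have "\<dots> = (\<Sum>i<d1. \<rho> (i*d2+a) (i*d2+b))"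
    proof (rule sum.cong[OF refl])
      fix i assume "i \<in> {..<d1}"
      then show "(\<Sum>k\<in>?K. x k (i*d2+a) * cnj (x k (i*d2+b))) = \<rho> (i*d2+a) (i*d2+b)"
        using g idx_facts(1)[of i d1 a d2] idx_facts(1)[of i d1 b d2] ab by simp
    qed
    finally show "(cmod (\<Sum>m\<in>{..<d1}\<times>?K. Y m a * cnj (Y m b)))^2 = (cmod (\<Sum>i<d1. \<rho> (i*d2+a) (i*d2+b)))^2"
      by simp
  qed
  finally show ?thesis by simp
qed

lemma ineq_N1:
  fixes d1 d2 :: nat and \<rho> x :: "nat \<Rightarrow> nat \<Rightarrow> complex"
  assumes g: "\<forall>r<d1*d2. \<forall>c<d1*d2. \<rho> r c = (\<Sum>k<d1*d2. x k r * cnj (x k c))"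
  shows "(\<Sum>r<d1*d2. \<Sum>c<d1*d2. (cmod (\<rho> r c))^2)
      \<le> real d2 * (\<Sum>i<d1. \<Sum>j<d1. (cmod (\<Sum>a<d2. \<rho> (i*d2+a) (j*d2+a)))^2)"
proof -
  let ?K = "{..<d1*d2}"
  define W where "W = (\<lambda>k l a b. \<Sum>i<d1. x k (i*d2+a) * cnj (x l (i*d2+b)))"
  define Y where "Y = (\<lambda>m i. x (snd m) (i * d2 + fst m))"
  have "(\<Sum>r<d1*d2. \<Sum>c<d1*d2. (cmod (\<rho> r c))^2)
      = (\<Sum>k\<in>?K. \<Sum>l\<in>?K. (cmod (\<Sum>a<d2. W k l a a))^2)"
    unfolding N_gram[OF g] W_def
    by (intro sum.cong refl) (simp only: sum_split_prod sum.swap[of _ "{..<d1}" "{..<d2}"])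
  also have "\<dots> \<le> real d2 * (\<Sum>m\<in>{..<d2}\<times>?K. \<Sum>m'\<in>{..<d2}\<times>?K. (cmod (W (snd m) (snd m') (fst m) (fst m')))^2)"
    by (rule diag_ineq) simp
  also have "(\<Sum>m\<in>{..<d2}\<times>?K. \<Sum>m'\<in>{..<d2}\<times>?K. (cmod (W (snd m) (snd m') (fst m) (fst m')))^2)
      = (\<Sum>m\<in>{..<d2}\<times>?K. \<Sum>m'\<in>{..<d2}\<times>?K. (cmod (\<Sum>i<d1. Y m i * cnj (Y m' i)))^2)"
    unfolding W_def Y_def ..
  also have "\<dots> = (\<Sum>i<d1. \<Sum>j<d1. (cmod (\<Sum>m\<in>{..<d2}\<times>?K. Y m i * cnj (Y m j)))^2)"
    by (rule idA[symmetric]) auto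
  also have "\<dots> = (\<Sum>i<d1. \<Sum>j<d1. (cmod (\<Sum>a<d2. \<rho> (i*d2+a) (j*d2+a)))^2)"
  proof (intro sum.cong refl)
    fix i j assume ij: "i \<in> {..<d1}" "j \<in> {..<d1}"
    have "(\<Sum>m\<in>{..<d2}\<times>?K. Y m i * cnj (Y m j)) = (\<Sum>a<d2. \<Sum>k\<in>?K. x k (i*d2+a) * cnj (x k (j*d2+a)))"
      unfolding sum_prod_set Y_def by simp
    also have "\<dots> = (\<Sum>a<d2. \<rho> (i*d2+a) (j*d2+a))"
    proof (rule sum.cong[OF refl])
      fix a assume "a \<in> {..<d2}"
      then show "(\<Sum>k\<in>?K. x k (i*d2+a) * cnj (x k (j*d2+a))) = \<rho> (i*d2+a) (j*d2+a)"
        using g idx_facts(1)[of i d1 a d2] idx_facts(1)[of j d1 a d2] ij by simp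
    qed
    finally show "(cmod (\<Sum>m\<in>{..<d2}\<times>?K. Y m i * cnj (Y m j)))^2 = (cmod (\<Sum>a<d2. \<rho> (i*d2+a) (j*d2+a)))^2"
      by simp
  qed
  finally show ?thesis by simp
qed

lemma ineq_N0:
  fixes n :: nat and \<rho> x :: "nat \<Rightarrow> nat \<Rightarrow> complex"
  assumes g: "\<forall>r<n. \<forall>c<n. \<rho> r c = (\<Sum>k<n. x k r * cnj (x k c))"
    and tr: "mtrace n \<rho> = 1"
  shows "(\<Sum>r<n. \<Sum>c<n. (cmod (\<rho> r c))^2) \<le> 1"
proof -
  define gk where "gk = (\<lambda>k. \<Sum>r<n. (cmod (x k r))^2)"
  have "(\<Sum>r<n. \<Sum>c<n. (cmod (\<rho> r c))^2)
      = (\<Sum>r<n. \<Sum>c<n. (cmod (\<Sum>k<n. x k r * cnj (x k c)))^2)"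
    using g by (intro sum.cong refl) simp
  also have "\<dots> = (\<Sum>k<n. \<Sum>l<n. (cmod (\<Sum>r<n. x k r * cnj (x l r)))^2)"
    by (rule idA) auto
  also have "\<dots> \<le> (\<Sum>k<n. \<Sum>l<n. gk k * gk l)"
    unfolding gk_def by (intro sum_mono cs_complex)
  also have "\<dots> = (\<Sum>k<n. gk k)^2" by (simp add: power2_eq_square sum_product)
  also have "(\<Sum>k<n. gk k) = 1"
  proof -
    have "complex_of_real (\<Sum>k<n. gk k) = (\<Sum>k<n. \<Sum>r<n. x k r * cnj (x k r))"
      unfolding gk_def of_real_sum complex_norm_square ..
    also have "\<dots> = (\<Sum>r<n. \<Sum>k<n. x k r * cnj (x k r))" by (rule sum.swap)
    also have "\<dots> = mtrace n \<rho>" unfolding mtrace_def using g by (intro sum.cong refl) simp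
    finally have "complex_of_real (\<Sum>k<n. gk k) = 1" using tr by (simp only: of_real_sum)
    then show ?thesis using of_real_eq_1_iff by blast
  qed
  finally show ?thesis by simp
qed

lemma sum_first: "1 \<le> (n::nat) \<Longrightarrow> (\<Sum>u<n. g u) = g 0 + (\<Sum>u\<in>{1..<n}. g u)"
  by (simp add: atLeast0LessThan[symmetric] sum.atLeast_Suc_lessThan)

lemma split_sum2:
  fixes f :: "nat \<Rightarrow> nat \<Rightarrow> real"
  assumes "1 \<le> n1" "1 \<le> n2"
  shows "(\<Sum>u1\<in>{1..<n1}. \<Sum>u2\<in>{1..<n2}. f u1 u2)
       = (\<Sum>u1<n1. \<Sum>u2<n2. f u1 u2) - (\<Sum>u2<n2. f 0 u2) - (\<Sum>u1<n1. f u1 0) + f 0 0"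
proof -
  have "(\<Sum>u1<n1. \<Sum>u2<n2. f u1 u2) = (\<Sum>u1<n1. f u1 0 + (\<Sum>u2\<in>{1..<n2}. f u1 u2))"
    by (intro sum.cong refl) (rule sum_first[OF assms(2)])
  also have "\<dots> = (\<Sum>u1<n1. f u1 0) + (\<Sum>u1<n1. \<Sum>u2\<in>{1..<n2}. f u1 u2)" by (simp add: sum.distrib)
  also have "(\<Sum>u1<n1. \<Sum>u2\<in>{1..<n2}. f u1 u2) = (\<Sum>u2\<in>{1..<n2}. f 0 u2) + (\<Sum>u1\<in>{1..<n1}. \<Sum>u2\<in>{1..<n2}. f u1 u2)"
    by (rule sum_first[OF assms(1)])
  finally show ?thesis using sum_first[OF assms(2), of "f 0"] by simp
qed

lemma cplx_sq_sum: "(\<Sum>i\<in>A. z i * cnj (z i)) = complex_of_real (\<Sum>i\<in>A. (cmod (z i))^2)"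
  by (simp only: of_real_sum complex_norm_square)

lemma final_arith:
  fixes a b N N1 N2 :: real
  assumes a: "a \<ge> 2" and b: "b \<ge> 2" and h2: "N \<le> a * N2" and h1: "N \<le> b * N1" and h0: "N \<le> 1"
  shows "a*b*N - b*N2 - a*N1 + 1 \<le> (a*b) * (1 - 1 / a^2 - 1 / b^2) + 1"
proof -
  have e: "(a*b) * (1 - 1 / a^2 - 1 / b^2) = a*b - b/a - a/b" using a b by (simp add: field_simps power2_eq_square)
  have n2: "b*N2 \<ge> b/a * N" using h2 a b by (simp add: field_simps)
  have n1: "a*N1 \<ge> a/b * N" using h1 a b by (simp add: field_simps)
  have c: "a*b - b/a - a/b \<ge> 0"
  proof -
    have "b/a \<le> b" using a b by (simp add: field_simps)
    moreover have "a/b \<le> a" using a b by (simp add: field_simps)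
    moreover have "a + b \<le> a*b"
    proof -
      have "0 \<le> (a-2)*(b-2)" using a b by simp
      also have "(a-2)*(b-2) = a*b - 2*a - 2*b + 4" by (simp add: algebra_simps)
      finally show ?thesis using a b by linarith
    qed
    ultimately show ?thesis by linarith
  qed
  have "a*b*N - b*N2 - a*N1 \<le> (a*b - b/a - a/b) * N" using n1 n2 by (simp add: algebra_simps)
  also have "\<dots> \<le> (a*b - b/a - a/b) * 1" using mult_left_mono[OF h0 c] .
  finally show ?thesis using e by simp
qed

theorem lemma2:
  fixes d1 d2 :: nat and w1 w2 :: complex and \<rho> :: "nat \<Rightarrow> nat \<Rightarrow> complex"
  assumes "d1 \<ge> 2" and "d2 \<ge> 2"
    and "primitive_root d1 w1" and "primitive_root d2 w2"
    and "density_op (d1 * d2) \<rho>"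
  shows "(\<Sum>u1\<in>{1..<d1^2}. \<Sum>u2\<in>{1..<d2^2}. (cmod (corr d1 d2 w1 w2 \<rho> u1 u2))^2)
           \<le> real (d1 * d2) * (1 - 1 / real d1 ^ 2 - 1 / real d2 ^ 2) + 1"
proof -
  have d1: "d1 \<ge> 1" and d2: "d2 \<ge> 1" using assms(1,2) by auto
  note pr1 = assms(3) and pr2 = assms(4)
  have H: "herm (d1*d2) \<rho>" and P: "psd (d1*d2) \<rho>" and tr: "mtrace (d1*d2) \<rho> = 1"
    using assms(5) unfolding density_op_def herm_def psd_def qf_def by blast+
  obtain x where g: "\<forall>r<d1*d2. \<forall>c<d1*d2. \<rho> r c = (\<Sum>k<d1*d2. x k r * cnj (x k c))"
    using gram[OF H P] by blast
  define N where "N = (\<Sum>r<d1*d2. \<Sum>c<d1*d2. (cmod (\<rho> r c))^2)"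
  define \<rho>2 where "\<rho>2 = (\<lambda>a b. \<Sum>i<d1. \<rho> (i*d2+a) (i*d2+b))"
  define \<rho>1 where "\<rho>1 = (\<lambda>i j. \<Sum>a<d2. \<rho> (i*d2+a) (j*d2+a))"
  define N2 where "N2 = (\<Sum>a<d2. \<Sum>b<d2. (cmod (\<rho>2 a b))^2)"
  define N1 where "N1 = (\<Sum>i<d1. \<Sum>j<d1. (cmod (\<rho>1 i j))^2)"
  define f where "f = (\<lambda>u1 u2. (cmod (corr d1 d2 w1 w2 \<rho> u1 u2))^2)"
  have all: "(\<Sum>u1<d1^2. \<Sum>u2<d2^2. f u1 u2) = real (d1*d2) * N"
  proof -
    have "complex_of_real (\<Sum>u1<d1^2. \<Sum>u2<d2^2. f u1 u2)
        = (\<Sum>u1<d1^2. \<Sum>u2<d2^2. corr d1 d2 w1 w2 \<rho> u1 u2 * cnj (corr d1 d2 w1 w2 \<rho> u1 u2))"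
      unfolding f_def by (simp only: of_real_sum complex_norm_square)
    also have "\<dots> = of_nat (d1*d2) * (\<Sum>r<d1*d2. \<Sum>c<d1*d2. \<rho> r c * cnj (\<rho> r c))"
      unfolding corr_eq by (rule tensor_parseval[OF pr1 d1 pr2 d2])
    also have "\<dots> = complex_of_real (real (d1*d2) * N)"
      unfolding N_def by (simp only: of_real_sum complex_norm_square of_real_mult of_real_of_nat_eq)
    finally show ?thesis using of_real_eq_iff by blast
  qed
  have p2: "(\<Sum>u2<d2^2. f 0 u2) = real d2 * N2"
  proof -
    have "complex_of_real (\<Sum>u2<d2^2. f 0 u2)
        = (\<Sum>u2<d2^2. corr d1 d2 w1 w2 \<rho> 0 u2 * cnj (corr d1 d2 w1 w2 \<rho> 0 u2))"
      unfolding f_def by (simp only: of_real_sum complex_norm_square)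
    also have "\<dots> = of_nat d2 * (\<Sum>a<d2. \<Sum>b<d2. \<rho>2 a b * cnj (\<rho>2 a b))"
      unfolding corr_0u \<rho>2_def by (rule pauli_parseval[OF pr2 d2])
    also have "\<dots> = complex_of_real (real d2 * N2)"
      unfolding N2_def by (simp only: of_real_sum complex_norm_square of_real_mult of_real_of_nat_eq)
    finally show ?thesis using of_real_eq_iff by blast
  qed
  have p1: "(\<Sum>u1<d1^2. f u1 0) = real d1 * N1"
  proof -
    have "complex_of_real (\<Sum>u1<d1^2. f u1 0)
        = (\<Sum>u1<d1^2. corr d1 d2 w1 w2 \<rho> u1 0 * cnj (corr d1 d2 w1 w2 \<rho> u1 0))"
      unfolding f_def by (simp only: of_real_sum complex_norm_square)
    also have "\<dots> = of_nat d1 * (\<Sum>i<d1. \<Sum>j<d1. \<rho>1 i j * cnj (\<rho>1 i j))"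
      unfolding corr_u0 \<rho>1_def by (rule pauli_parseval[OF pr1 d1])
    also have "\<dots> = complex_of_real (real d1 * N1)"
      unfolding N1_def by (simp only: of_real_sum complex_norm_square of_real_mult of_real_of_nat_eq)
    finally show ?thesis using of_real_eq_iff by blast
  qed
  have f00: "f 0 0 = 1" unfolding f_def corr_00 tr by simp
  have i2: "N \<le> real d1 * N2" unfolding N_def N2_def \<rho>2_def by (rule ineq_N2[OF g])
  have i1: "N \<le> real d2 * N1" unfolding N_def N1_def \<rho>1_def by (rule ineq_N1[OF g])
  have i0: "N \<le> 1" unfolding N_def by (rule ineq_N0[OF g tr])
  have d1sq: "1 \<le> d1^2" and d2sq: "1 \<le> d2^2" using d1 d2 by (simp_all add: one_le_power)
  have "(\<Sum>u1\<in>{1..<d1^2}. \<Sum>u2\<in>{1..<d2^2}. (cmod (corr d1 d2 w1 w2 \<rho> u1 u2))^2)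
      = real d1 * real d2 * N - real d2 * N2 - real d1 * N1 + 1"
    using split_sum2[OF d1sq d2sq, of f] all p1 p2 f00 unfolding f_def by simp
  also have "\<dots> \<le> (real d1 * real d2) * (1 - 1 / real d1 ^ 2 - 1 / real d2 ^ 2) + 1"
  proof (rule final_arith)
    show "real d1 \<ge> 2" "real d2 \<ge> 2" using assms(1,2) by simp_all
  qed (fact i2 i1 i0)+
  finally show ?thesis by simp
qed

end
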